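(* Suppose $\mathcal Y$ is finite-dimensional of dimension $d\in\mathbb N$. There exists a constant $c>0$ (depending only on $(\mathcal Y,\|\cdot\|_{\mathcal Y})$, not on the functional) such that the following holds: for every linear functional $H:\underline{\mathcal Z}\to\mathcal Y$ with a formal convolution representation $\underline\kappa$ and every $\underline z\in\underline{\mathcal Z}$, there exist disjoint subsets $J_1,\dots,J_{2^d}\subseteq\mathbb Z_-$ with $$\sum_{t\le0}\|\kappa_t(z_t)\|_{\mathcal Y}\le c\sum_{i=1}^{2^d}\Big\|H\Big(\sum_{t\in J_i}\delta^t(z_t)\Big)\Big\|_{\mathcal Y}<\infty.$$ In particular, the convolution representation of $H$ is proper.
   Context: Let $(\mathcal Z,\|\cdot\|)$ and $(\mathcal Y,\|\cdot\|_{\mathcal Y})$ be normed vector spaces over $\mathbb R$ and $\mathcal B=\{z\in\mathcal Z:\|z\|\le1\}$. Let $\mathbb Z_-=\{0,-1,-2,\dots\}$; elements of $\mathcal Z^{\mathbb Z_-}$ are sequences $\underline z=(z_t)_{t\le0}$. For $t\in\mathbb Z_-$, $\delta^t:\mathcal Z\to\mathcal Z^{\mathbb Z_-}$ maps $z$ to the sequence whose entry at time $t$ is $z$ and all other entries are $0$. Standing assumption: $\underline{\mathcal Z}\subseteq\mathcal Z^{\mathbb Z_-}$ is a set such that (a) $\underline{\mathcal Z}$ is convex and $\underline{\mathcal Z}=\{-\underline z:\underline z\in\underline{\mathcal Z}\}$; (b) $\delta^t(\mathcal B)\subseteq\underline{\mathcal Z}$ for all $t\in\mathbb Z_-$; (c)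 for every $\underline z\in\underline{\mathcal Z}$ and every $J\subseteq\mathbb Z_-$, the sequence $\sum_{t\in J}\delta^t(z_t)$ (equal to $z_t$ at times $t\in J$ and $0$ elsewhere) belongs to $\underline{\mathcal Z}$. A functional $H:\underline{\mathcal Z}\to\mathcal Y$ is linear if it is the restriction of a linear map defined on the linear span of $\underline{\mathcal Z}$. $L(\mathcal Z,\mathcal Y)$ is the space of continuous linear maps $\mathcal Z\to\mathcal Y$. $H$ has a formal convolution representation $\underline\kappa\in L(\mathcal Z,\mathcal Y)^{\mathbb Z_-}$ if $H(\underline z)=\lim_{T\to-\infty}\sum_{t=T}^0\kappa_t(z_t)$ for all $\underline z\in\underline{\mathcal Z}$; the representation is proper if moreover $\sum_{t\le0}\|\kappa_t(z_t)\|_{\mathcal Y}<\infty$ for all $\underline z\in\underline{\mathcal Z}$. *)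

theory Defs
  imports "HOL-Analysis.Analysis"
begin

(* Sequences indexed by Z_- = {0,-1,-2,...} are encoded as functions on nat:
   the value at n :: nat is the entry at time t = -n. *)

definition delta :: "nat \<Rightarrow> 'z::real_normed_vector \<Rightarrow> (nat \<Rightarrow> 'z)" where
  "delta t z = (\<lambda>s. if s = t then z else 0)"

(* the sequence equal to z_t for t in J and 0 elsewhere, i.e. sum_{t in J} delta^t(z_t) *)
definition restr_seq :: "nat set \<Rightarrow> (nat \<Rightarrow> 'z::real_normed_vector) \<Rightarrow> (nat \<Rightarrow> 'z)" where
  "restr_seq J z = (\<lambda>t. if t \<in> J then z t else 0)"

definition admissible_inputs :: "(nat \<Rightarrow> 'z::real_normed_vector) set \<Rightarrow> bool" where
  "admissible_inputs ZZ \<longleftrightarrow>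
     (\<forall>x\<in>ZZ. \<forall>y\<in>ZZ. \<forall>u::real. 0 \<le> u \<and> u \<le> 1 \<longrightarrow> (\<lambda>t. u *\<^sub>R x t + (1 - u) *\<^sub>R y t) \<in> ZZ)
   \<and> ZZ = {(\<lambda>t. - x t) | x. x \<in> ZZ}
   \<and> (\<forall>t. \<forall>z. norm z \<le> 1 \<longrightarrow> delta t z \<in> ZZ)
   \<and> (\<forall>x\<in>ZZ. \<forall>J. restr_seq J x \<in> ZZ)"

inductive_set seq_span :: "(nat \<Rightarrow> 'z::real_normed_vector) set \<Rightarrow> (nat \<Rightarrow> 'z) set"
  for A where
  zero: "(\<lambda>t. 0) \<in> seq_span A"
| base: "x \<in> A \<Longrightarrow> x \<in> seq_span A"
| add: "x \<in> seq_span A \<Longrightarrow> y \<in> seq_span A \<Longrightarrow> (\<lambda>t. x t + y t) \<in> seq_span A"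
| scale: "x \<in> seq_span A \<Longrightarrow> (\<lambda>t. r *\<^sub>R x t) \<in> seq_span A"

definition linear_functional ::
  "(nat \<Rightarrow> 'z::real_normed_vector) set \<Rightarrow> ((nat \<Rightarrow> 'z) \<Rightarrow> 'y::real_normed_vector) \<Rightarrow> bool" where
  "linear_functional ZZ H \<longleftrightarrow>
     (\<exists>L :: (nat \<Rightarrow> 'z) \<Rightarrow> 'y.
        (\<forall>x\<in>seq_span ZZ. \<forall>y\<in>seq_span ZZ. L (\<lambda>t. x t + y t) = L x + L y)
      \<and> (\<forall>x\<in>seq_span ZZ. \<forall>r. L (\<lambda>t. r *\<^sub>R x t) = r *\<^sub>R L x)
      \<and> (\<forall>x\<in>ZZ. H x = L x))"

definition formal_conv_rep ::
  "(nat \<Rightarrow> 'z::real_normed_vector) set \<Rightarrow> ((nat \<Rightarrow> 'z) \<Rightarrow> 'y::real_normed_vector)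
   \<Rightarrow> (nat \<Rightarrow> 'z \<Rightarrow> 'y) \<Rightarrow> bool" where
  "formal_conv_rep ZZ H \<kappa> \<longleftrightarrow>
     (\<forall>t. bounded_linear (\<kappa> t))
   \<and> (\<forall>z\<in>ZZ. (\<lambda>T. \<Sum>t\<le>T. \<kappa> t (z t)) \<longlonglongrightarrow> H z)"

definition proper_conv_rep ::
  "(nat \<Rightarrow> 'z::real_normed_vector) set \<Rightarrow> ((nat \<Rightarrow> 'z) \<Rightarrow> 'y::real_normed_vector)
   \<Rightarrow> (nat \<Rightarrow> 'z \<Rightarrow> 'y) \<Rightarrow> bool" where
  "proper_conv_rep ZZ H \<kappa> \<longleftrightarrow>
     formal_conv_rep ZZ H \<kappa> \<and> (\<forall>z\<in>ZZ. summable (\<lambda>t. norm (\<kappa> t (z t))))"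

end

theory Submission
  imports Defs
begin

lemma dist_pos_from_span:
  fixes v :: "'a::real_normed_vector"
  assumes fin: "finite T" and vT: "v \<notin> span T"
    and C: "\<And>a. (\<Sum>t\<in>T. \<bar>a t\<bar>) \<le> C * norm (\<Sum>t\<in>T. a t *\<^sub>R t)"
  shows "\<exists>\<delta>>0. \<forall>a. \<delta> \<le> norm (v - (\<Sum>t\<in>T. a t *\<^sub>R t))"
proof (rule ccontr)
  assume "\<not> ?thesis"
  then have "\<forall>j::nat. \<exists>a. norm (v - (\<Sum>t\<in>T. a t *\<^sub>R t)) < inverse (real (Suc j))"
    by (metis inverse_positive_iff_positive not_le of_nat_0_less_iff zero_less_Suc)
  then obtain A where A: "\<And>j. norm (v - (\<Sum>t\<in>T. A j t *\<^sub>R t)) < inverse (real (Suc j))"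
    by metis
  define W where "W j = (\<Sum>t\<in>T. A j t *\<^sub>R t)" for j
  have "(\<lambda>j. W j - v) \<longlonglongrightarrow> 0"
  proof (rule Lim_null_comparison[OF _ LIMSEQ_inverse_real_of_nat])
    show "\<forall>\<^sub>F j in sequentially. norm (W j - v) \<le> inverse (real (Suc j))"
      using A by (auto simp: W_def norm_minus_commute less_imp_le)
  qed
  then have Wv: "W \<longlonglongrightarrow> v" by (simp add: Lim_null[symmetric])
  then have CW: "Cauchy W" by (rule LIMSEQ_imp_Cauchy)
  have cauchyA: "Cauchy (\<lambda>j. A j t)" if "t \<in> T" for t
  proof (rule metric_CauchyI)
    fix e :: real assume "e > 0"
    then have "e / (\<bar>C\<bar> + 1) > 0" by simp
    then obtain M where M: "\<And>m n. m \<ge> M \<Longrightarrow> n \<ge> M \<Longrightarrow> dist (W m) (W n) < e / (\<bar>C\<bar> + 1)"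
      using CW by (metis metric_CauchyD)
    show "\<exists>M. \<forall>m\<ge>M. \<forall>n\<ge>M. dist (A m t) (A n t) < e"
    proof (intro exI allI impI)
      fix m n assume mn: "m \<ge> M" "n \<ge> M"
      have "dist (A m t) (A n t) = \<bar>A m t - A n t\<bar>" by (simp add: dist_real_def)
      also have "\<dots> \<le> (\<Sum>s\<in>T. \<bar>A m s - A n s\<bar>)"
        using that fin by (intro member_le_sum) auto
      also have "\<dots> \<le> C * norm (\<Sum>s\<in>T. (A m s - A n s) *\<^sub>R s)" by (rule C)
      also have "(\<Sum>s\<in>T. (A m s - A n s) *\<^sub>R s) = W m - W n"
        by (simp add: W_def scaleR_left_diff_distrib sum_subtractf)
      also have "C * norm (W m - W n) \<le> (\<bar>C\<bar> + 1) * norm (W m - W n)"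
        by (intro mult_right_mono) auto
      also have "\<dots> < (\<bar>C\<bar> + 1) * (e / (\<bar>C\<bar> + 1))"
        using M[OF mn] by (intro mult_strict_left_mono) (auto simp: dist_norm)
      also have "\<dots> = e" by simp
      finally show "dist (A m t) (A n t) < e" .
    qed
  qed
  define a where "a t = lim (\<lambda>j. A j t)" for t
  have "(\<lambda>j. A j t) \<longlonglongrightarrow> a t" if "t \<in> T" for t
    using cauchyA[OF that] unfolding a_def by (simp add: Cauchy_convergent_iff convergent_LIMSEQ_iff)
  then have "W \<longlonglongrightarrow> (\<Sum>t\<in>T. a t *\<^sub>R t)"
    unfolding W_def by (intro tendsto_sum tendsto_scaleR tendsto_const) auto
  with Wv have "v = (\<Sum>t\<in>T. a t *\<^sub>R t)" by (rule LIMSEQ_unique)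
  then have "v \<in> span T" by (simp add: span_sum span_scale span_base)
  with vT show False by simp
qed

lemma norm_equiv_core:
  fixes T :: "'a::real_normed_vector set"
  assumes "finite T" "independent T"
  shows "\<exists>C>0. \<forall>a. (\<Sum>t\<in>T. \<bar>a t\<bar>) \<le> C * norm (\<Sum>t\<in>T. a t *\<^sub>R t)"
  using assms
proof (induction T rule: finite_induct)
  case empty
  then show ?case by (intro exI[of _ 1]) auto
next
  case (insert v T)
  from insert.prems insert.hyps have indT: "independent T" and vT: "v \<notin> span T"
    by (auto simp: independent_insert)
  obtain C where Cp: "C > 0" and C: "\<And>a. (\<Sum>t\<in>T. \<bar>a t\<bar>) \<le> C * norm (\<Sum>t\<in>T. a t *\<^sub>R t)"
    using insert.IH[OF indT] by blast
  obtain \<delta> where dp: "\<delta> > 0" and d: "\<And>a. \<delta> \<le> norm (v - (\<Sum>t\<in>T. a t *\<^sub>R t))"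
    using dist_pos_from_span[OF insert.hyps(1) vT C] by blast
  show ?case
  proof (intro exI[of _ "1/\<delta> + C * (1 + norm v / \<delta>)"] conjI allI)
    show "0 < 1/\<delta> + C * (1 + norm v / \<delta>)" using dp Cp by (simp add: add_pos_nonneg)
    fix a :: "'a \<Rightarrow> real"
    define w where "w = (\<Sum>t\<in>T. a t *\<^sub>R t)"
    define y where "y = a v *\<^sub>R v + w"
    have sy: "(\<Sum>t\<in>insert v T. a t *\<^sub>R t) = y"
      using insert.hyps by (simp add: y_def w_def)
    have sa: "(\<Sum>t\<in>insert v T. \<bar>a t\<bar>) = \<bar>a v\<bar> + (\<Sum>t\<in>T. \<bar>a t\<bar>)"
      using insert.hyps by simp
    have av: "\<bar>a v\<bar> * \<delta> \<le> norm y"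
    proof (cases "a v = 0")
      case True then show ?thesis by simp
    next
      case False
      have "a v *\<^sub>R (v - (\<Sum>t\<in>T. (- (a t / a v)) *\<^sub>R t)) = y"
        using False by (simp add: y_def w_def scaleR_add_right scaleR_sum_right sum_negf)
      then have "y = a v *\<^sub>R (v - (\<Sum>t\<in>T. (- (a t / a v)) *\<^sub>R t))" by simp
      then have "norm y = \<bar>a v\<bar> * norm (v - (\<Sum>t\<in>T. (- (a t / a v)) *\<^sub>R t))" by simp
      moreover have "\<delta> \<le> norm (v - (\<Sum>t\<in>T. (- (a t / a v)) *\<^sub>R t))" by (rule d)
      ultimately show ?thesis by (simp add: mult_left_mono)
    qed
    then have av': "\<bar>a v\<bar> \<le> norm y / \<delta>" using dp by (simp add: field_simps)
    have "(\<Sum>t\<in>T. \<bar>a t\<bar>) \<le> C * norm w" unfolding w_def by (rule C)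
    also have "norm w \<le> norm y + \<bar>a v\<bar> * norm v"
    proof -
      have "w = y - a v *\<^sub>R v" by (simp add: y_def)
      then show ?thesis by (metis norm_scaleR norm_triangle_ineq4)
    qed
    then have "C * norm w \<le> C * (norm y + \<bar>a v\<bar> * norm v)" using Cp by simp
    also have "\<dots> \<le> C * (norm y + norm y / \<delta> * norm v)"
      using av' Cp by (intro mult_left_mono add_left_mono mult_right_mono) auto
    finally have "(\<Sum>t\<in>T. \<bar>a t\<bar>) \<le> C * (norm y + norm y / \<delta> * norm v)" .
    with av' have "(\<Sum>t\<in>insert v T. \<bar>a t\<bar>) \<le> norm y / \<delta> + C * (norm y + norm y / \<delta> * norm v)"
      unfolding sa by linarith
    also have "\<dots> = (1/\<delta> + C * (1 + norm v / \<delta>)) * norm y" by (simp add: field_simps)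
    finally show "(\<Sum>t\<in>insert v T. \<bar>a t\<bar>) \<le> (1/\<delta> + C * (1 + norm v / \<delta>)) * norm (\<Sum>t\<in>insert v T. a t *\<^sub>R t)"
      unfolding sy .
  qed
qed


lemma coord_setup:
  fixes dummy :: "'y::real_normed_vector"
  assumes fin_dim: "\<exists>B :: 'y set. finite B \<and> span B = UNIV"
  obtains B :: "'y set" and C where "finite B" "independent B" "span B = UNIV"
    "card B = dim (UNIV :: 'y set)" "C > 0"
    "\<And>y. (\<Sum>b\<in>B. \<bar>representation B y b\<bar>) \<le> C * norm y"
    "\<And>y. y = (\<Sum>b\<in>B. representation B y b *\<^sub>R b)"
    "\<And>b. bounded_linear (\<lambda>y. representation B y b)"
proof -
  obtain B0 :: "'y set" where B0: "finite B0" "span B0 = UNIV" using fin_dim by blast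
  obtain B :: "'y set" where B: "independent B" "UNIV \<subseteq> span B" "card B = dim (UNIV :: 'y set)"
    using basis_exists[of "UNIV :: 'y set"] by blast
  have finB: "finite B" using independent_span_bound[OF B0(1) B(1)] B0(2) by auto
  have spB: "span B = UNIV" using B(2) by auto
  obtain C where Cp: "C > 0" and C: "\<And>a. (\<Sum>t\<in>B. \<bar>a t\<bar>) \<le> C * norm (\<Sum>t\<in>B. a t *\<^sub>R t)"
    using norm_equiv_core[OF finB B(1)] by blast
  have rep: "y = (\<Sum>b\<in>B. representation B y b *\<^sub>R b)" for y
    using sum_representation_eq[OF B(1) _ finB order_refl, of y] spB by simp
  have bnd: "(\<Sum>b\<in>B. \<bar>representation B y b\<bar>) \<le> C * norm y" for y
    using C[of "representation B y"] rep[of y] by simp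
  have bl: "bounded_linear (\<lambda>y. representation B y b)" for b
  proof (rule bounded_linear_intro[where K = C])
    show "representation B (x + y) b = representation B x b + representation B y b" for x y
      using representation_add[OF B(1), of y x] spB by simp
    show "representation B (r *\<^sub>R x) b = r *\<^sub>R representation B x b" for r x
      using representation_scale[OF B(1), of x r] spB by simp
    show "norm (representation B x b) \<le> norm x * C" for x
    proof (cases "b \<in> B")
      case True
      have "\<bar>representation B x b\<bar> \<le> (\<Sum>b\<in>B. \<bar>representation B x b\<bar>)"
        using True finB by (intro member_le_sum) auto
      then show ?thesis using bnd[of x] by (simp add: mult.commute)
    next
      case False
      then have "representation B x b = 0" by (meson representation_ne_zero)
      then show ?thesis using Cp by simp
    qed
  qed
  show ?thesis using that[OF finB B(1) spB B(3) Cp bnd rep bl] .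
qed

theorem lemma3p9:
  fixes d :: nat
  assumes fin_dim: "\<exists>B :: 'y::real_normed_vector set. finite B \<and> span B = UNIV"
    and dim_Y: "dim (UNIV :: 'y set) = d"
  shows "\<exists>c>0. \<forall>(ZZ :: (nat \<Rightarrow> 'z::real_normed_vector) set) (H :: (nat \<Rightarrow> 'z) \<Rightarrow> 'y) \<kappa>.
           admissible_inputs ZZ \<and> linear_functional ZZ H \<and> formal_conv_rep ZZ H \<kappa> \<longrightarrow>
           (\<forall>z\<in>ZZ. \<exists>J :: nat \<Rightarrow> nat set.
               (\<forall>i\<in>{1..2^d}. \<forall>j\<in>{1..2^d}. i \<noteq> j \<longrightarrow> J i \<inter> J j = {})
             \<and> summable (\<lambda>t. norm (\<kappa> t (z t)))
             \<and> (\<Sum>t. norm (\<kappa> t (z t))) \<le> c * (\<Sum>i=1..2^d. norm (H (restr_seq (J i) z))))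
           \<and> proper_conv_rep ZZ H \<kappa>"
proof (rule coord_setup[OF fin_dim])
  fix B :: "'y set" and C
  assume finB: "finite B" and indB: "independent B"
    and spB: "span B = UNIV" and cardB0: "card B = dim (UNIV :: 'y set)" and Cp: "C > 0"
    and bnd: "\<And>y. (\<Sum>b\<in>B. \<bar>representation B y b\<bar>) \<le> C * norm y"
    and rep: "\<And>y. y = (\<Sum>b\<in>B. representation B y b *\<^sub>R b)"
    and bl: "\<And>b. bounded_linear (\<lambda>y. representation B y b)"
  have cardB: "card B = d" using cardB0 dim_Y by simp
  define r where "r b y = representation B y b" for b y
  have rbl: "bounded_linear (r b)" for b using bl[of b] unfolding r_def by simp
  have rbnd: "\<bar>r b y\<bar> \<le> C * norm y" if "b \<in> B" for b y
  proof -
    have "\<bar>r b y\<bar> \<le> (\<Sum>b\<in>B. \<bar>r b y\<bar>)" using that finB by (intro member_le_sum) auto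
    then show ?thesis using bnd[of y] unfolding r_def by simp
  qed
  have normle: "norm y \<le> (\<Sum>b\<in>B. norm b * \<bar>r b y\<bar>)" for y
  proof -
    have "norm y = norm (\<Sum>b\<in>B. r b y *\<^sub>R b)" using rep[of y] unfolding r_def by simp
    also have "\<dots> \<le> (\<Sum>b\<in>B. norm (r b y *\<^sub>R b))" by (rule norm_sum)
    also have "\<dots> = (\<Sum>b\<in>B. norm b * \<bar>r b y\<bar>)" by (simp add: mult.commute)
    finally show ?thesis .
  qed
  define M where "M = (\<Sum>b\<in>B. norm b)"
  have M0: "M \<ge> 0" unfolding M_def by (simp add: sum_nonneg)
  define I where "I = {1..(2::nat)^d}"
  have finI: "finite I" unfolding I_def by simp
  obtain h where h: "bij_betw h I (Pow B)"
    using ex_bij_betw_nat_finite_1[of "Pow B"] finB cardB by (auto simp: card_Pow I_def)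
  have key: "\<exists>J :: nat \<Rightarrow> nat set.
               (\<forall>i\<in>{1..2^d}. \<forall>j\<in>{1..2^d}. i \<noteq> j \<longrightarrow> J i \<inter> J j = {})
             \<and> summable (\<lambda>t. norm (\<kappa> t (z t)))
             \<and> (\<Sum>t. norm (\<kappa> t (z t))) \<le> (C * M + 1) * (\<Sum>i=1..2^d. norm (H (restr_seq (J i) z)))"
    if adm: "admissible_inputs ZZ" and frep: "formal_conv_rep ZZ H \<kappa>" and zZ: "z \<in> ZZ"
    for ZZ :: "(nat \<Rightarrow> 'z::real_normed_vector) set" and H :: "(nat \<Rightarrow> 'z) \<Rightarrow> 'y" and \<kappa> z
  proof -
    have restr_in: "restr_seq J z \<in> ZZ" for J using adm zZ unfolding admissible_inputs_def by blast
    have kbl: "bounded_linear (\<kappa> t)" for t using frep unfolding formal_conv_rep_def by blast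
    define x where "x t = \<kappa> t (z t)" for t
    have HJ: "(\<lambda>N. \<Sum>t\<le>N. if t \<in> J then x t else 0) \<longlonglongrightarrow> H (restr_seq J z)" for J
    proof -
      have "(\<lambda>N. \<Sum>t\<le>N. \<kappa> t (restr_seq J z t)) \<longlonglongrightarrow> H (restr_seq J z)"
        using frep restr_in[of J] unfolding formal_conv_rep_def by blast
      moreover have "\<kappa> t (restr_seq J z t) = (if t \<in> J then x t else 0)" for t
        using bounded_linear.linear[OF kbl[of t]] by (simp add: restr_seq_def x_def linear_0)
      ultimately show ?thesis by simp
    qed
    define sg where "sg t = {b\<in>B. r b (x t) < 0}" for t
    define J where "J i = {t. sg t = h i}" for i
    define HH where "HH i = H (restr_seq (J i) z)" for i
    have injh: "inj_on h I" using h by (simp add: bij_betw_def)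
    have disj: "\<forall>i\<in>{1..2^d}. \<forall>j\<in>{1..2^d}. i \<noteq> j \<longrightarrow> J i \<inter> J j = {}"
      using injh unfolding I_def J_def inj_on_def by auto
    have part: "(\<Sum>i\<in>I. if t \<in> J i then g else 0) = g" for t and g :: real
    proof -
      have "sg t \<in> Pow B" unfolding sg_def by auto
      then obtain i0 where i0: "i0 \<in> I" "h i0 = sg t" using h by (metis bij_betw_def imageE)
      have "(\<Sum>i\<in>I. if t \<in> J i then g else 0) = (\<Sum>i\<in>I. if i = i0 then g else 0)"
        using injh i0 unfolding J_def inj_on_def by (intro sum.cong) auto
      also have "\<dots> = g" using i0 finI by simp
      finally show ?thesis .
    qed
    define s where "s i b = (if b \<in> h i then -1 else (1::real))" for i b
    define L where "L b = (\<Sum>i\<in>I. s i b * r b (HH i))" for b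
    have sums_b: "(\<lambda>t. \<bar>r b (x t)\<bar>) sums L b" if bB: "b \<in> B" for b
    proof -
      have eq: "(\<Sum>t\<le>N. \<bar>r b (x t)\<bar>) = (\<Sum>i\<in>I. s i b * r b (\<Sum>t\<le>N. if t \<in> J i then x t else 0))" for N
      proof -
        have "(\<Sum>t\<le>N. \<bar>r b (x t)\<bar>) = (\<Sum>t\<le>N. \<Sum>i\<in>I. if t \<in> J i then \<bar>r b (x t)\<bar> else 0)"
          using part by simp
        also have "\<dots> = (\<Sum>i\<in>I. \<Sum>t\<le>N. if t \<in> J i then \<bar>r b (x t)\<bar> else 0)"
          by (rule sum.swap)
        also have "\<dots> = (\<Sum>i\<in>I. s i b * r b (\<Sum>t\<le>N. if t \<in> J i then x t else 0))"
        proof (rule sum.cong[OF refl])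
          fix i assume "i \<in> I"
          have lin: "linear (r b)" using rbl[of b] by (rule bounded_linear.linear)
          have "r b (\<Sum>t\<le>N. if t \<in> J i then x t else 0) = (\<Sum>t\<le>N. if t \<in> J i then r b (x t) else 0)"
          proof -
            have r0: "r b 0 = 0" by (simp add: r_def representation_zero)
            show ?thesis unfolding linear_sum[OF lin] by (intro sum.cong) (auto simp: r0)
          qed
          moreover have "(if t \<in> J i then \<bar>r b (x t)\<bar> else 0) = s i b * (if t \<in> J i then r b (x t) else 0)" for t
          proof (cases "t \<in> J i")
            case True
            then have e: "sg t = h i" by (simp add: J_def)
            have "b \<in> sg t \<longleftrightarrow> r b (x t) < 0" using bB by (simp add: sg_def)
            then have "b \<in> h i \<longleftrightarrow> r b (x t) < 0" using e by simp
            then show ?thesis using True by (simp add: s_def abs_if)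
          next
            case False
            then show ?thesis by simp
          qed
          ultimately show "(\<Sum>t\<le>N. if t \<in> J i then \<bar>r b (x t)\<bar> else 0) = s i b * r b (\<Sum>t\<le>N. if t \<in> J i then x t else 0)"
            by (simp add: sum_distrib_left)
        qed
        finally show ?thesis .
      qed
      have "(\<lambda>N. \<Sum>i\<in>I. s i b * r b (\<Sum>t\<le>N. if t \<in> J i then x t else 0)) \<longlonglongrightarrow> L b"
        unfolding L_def HH_def
        by (intro tendsto_sum tendsto_mult_left bounded_linear.tendsto[OF rbl] HJ)
      then show ?thesis unfolding sums_def_le eq .
    qed
    define S where "S = (\<Sum>i=1..2^d. norm (HH i))"
    have S0: "S \<ge> 0" unfolding S_def by (simp add: sum_nonneg)
    have Lb: "L b \<le> C * S" if "b \<in> B" for b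
    proof -
      have "L b \<le> (\<Sum>i\<in>I. \<bar>r b (HH i)\<bar>)" unfolding L_def
        by (intro sum_mono) (auto simp: s_def)
      also have "\<dots> \<le> (\<Sum>i\<in>I. C * norm (HH i))" using rbnd[OF that] by (intro sum_mono) auto
      also have "\<dots> = C * S" unfolding S_def I_def by (simp add: sum_distrib_left)
      finally show ?thesis .
    qed
    have sumG: "(\<lambda>t. \<Sum>b\<in>B. norm b * \<bar>r b (x t)\<bar>) sums (\<Sum>b\<in>B. norm b * L b)"
      using sums_b by (intro sums_sum sums_mult) auto
    have summ: "summable (\<lambda>t. norm (x t))"
      by (rule summable_comparison_test[OF _ sums_summable[OF sumG]]) (auto intro: normle)
    have "(\<Sum>t. norm (x t)) \<le> (\<Sum>t. \<Sum>b\<in>B. norm b * \<bar>r b (x t)\<bar>)"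
      by (rule suminf_le[OF _ summ sums_summable[OF sumG]]) (rule normle)
    also have "\<dots> = (\<Sum>b\<in>B. norm b * L b)" using sumG by (rule sums_unique[symmetric])
    also have "\<dots> \<le> (\<Sum>b\<in>B. norm b * (C * S))" using Lb by (intro sum_mono mult_left_mono) auto
    also have "\<dots> = (C * M) * S" unfolding M_def by (simp add: sum_distrib_right sum_distrib_left mult.commute mult.left_commute)
    also have "\<dots> \<le> (C * M + 1) * S" using S0 by (simp add: distrib_right)
    finally have fin: "(\<Sum>t. norm (x t)) \<le> (C * M + 1) * S" .
    show ?thesis
      by (rule exI[of _ J]) (use disj summ fin in \<open>simp add: x_def S_def HH_def\<close>)
  qed
  show ?thesis
  proof (rule exI[of _ "C * M + 1"], intro conjI allI impI)
    show "0 < C * M + 1" using Cp M0 by (simp add: add_nonneg_pos)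
    fix ZZ :: "(nat \<Rightarrow> 'z::real_normed_vector) set" and H :: "(nat \<Rightarrow> 'z) \<Rightarrow> 'y" and \<kappa>
    assume A: "admissible_inputs ZZ \<and> linear_functional ZZ H \<and> formal_conv_rep ZZ H \<kappa>"
    show "\<forall>z\<in>ZZ. \<exists>J :: nat \<Rightarrow> nat set.
               (\<forall>i\<in>{1..2^d}. \<forall>j\<in>{1..2^d}. i \<noteq> j \<longrightarrow> J i \<inter> J j = {})
             \<and> summable (\<lambda>t. norm (\<kappa> t (z t)))
             \<and> (\<Sum>t. norm (\<kappa> t (z t))) \<le> (C * M + 1) * (\<Sum>i=1..2^d. norm (H (restr_seq (J i) z)))"
      using key A by blast
    then show "proper_conv_rep ZZ H \<kappa>"
      using A unfolding proper_conv_rep_def by blast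
  qed
qed

end
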